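(* Let $N\ge1$, $K\ge2$ be integers with $K$ even and $N$ divisible by $K$, and consider the constant-sum game $\mathcal{B}_1(N,K)$. A pure strategy $s\in S$ is used with positive probability in some Nash equilibrium of $\mathcal{B}_1(N,K)$ (i.e., there exist a Nash equilibrium $(\sigma^A,\sigma^B)$ and a player $i$ with $\sigma^i(s)>0$) if and only if $s_k\le 2N/K$ for every battlefield $k\in\{1,\ldots,K\}$.
   Context: Fix integers $N\ge1$, $K\ge2$ and a real number $\alpha$. The Colonel Blotto game $\mathcal{B}_\alpha(N,K)$ is the two-player simultaneous-move game with players $A,B$, each with pure strategy set $S=\{s\in\{0,1,\ldots,N\}^K:\sum_{k=1}^K s_k=N\}$, in which the payoff of player $i$ at the pure profile $(s^i,s^{-i})$ is $\pi^i(s^i,s^{-i})=\sum_{k=1}^K\big(\mathbf 1[s^i_k>s^{-i}_k]+\tfrac{\alpha}{2}\mathbf 1[s^i_k=s^{-i}_k]\big)$. For $\alpha=1$ the payoffs of the two players always sum to $K$. Mixed strategies are probability distributions on $S$, with expected payoffs under independent randomization; a Nash equilibrium is a mixed profile from which no unilateral deviation raises a player's expected payoff. *)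

theory Defs
  imports Main "HOL-Library.Extended_Real" Complex_Main
begin

text \<open>Battlefields are indexed 0..K-1. A pure strategy is an allocation
  s :: nat => nat, zero outside the battlefields, summing to N.\<close>

definition blotto_S :: "nat \<Rightarrow> nat \<Rightarrow> (nat \<Rightarrow> nat) set" where
  "blotto_S N K = {s. (\<forall>k. K \<le> k \<longrightarrow> s k = 0) \<and> (\<Sum>k<K. s k) = N}"

definition blotto_payoff :: "real \<Rightarrow> nat \<Rightarrow> (nat \<Rightarrow> nat) \<Rightarrow> (nat \<Rightarrow> nat) \<Rightarrow> real" where
  "blotto_payoff \<alpha> K s t =
     (\<Sum>k<K. (if s k > t k then 1 else 0) + \<alpha> / 2 * (if s k = t k then 1 else 0))"

definition mixed :: "nat \<Rightarrow> nat \<Rightarrow> ((nat \<Rightarrow> nat) \<Rightarrow> real) \<Rightarrow> bool" where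
  "mixed N K \<sigma> \<longleftrightarrow> (\<forall>s. 0 \<le> \<sigma> s) \<and> (\<forall>s. s \<notin> blotto_S N K \<longrightarrow> \<sigma> s = 0)
      \<and> (\<Sum>s\<in>blotto_S N K. \<sigma> s) = 1"

definition exp_payoff :: "real \<Rightarrow> nat \<Rightarrow> nat \<Rightarrow> ((nat \<Rightarrow> nat) \<Rightarrow> real) \<Rightarrow> ((nat \<Rightarrow> nat) \<Rightarrow> real) \<Rightarrow> real" where
  "exp_payoff \<alpha> N K \<sigma> \<tau> =
     (\<Sum>s\<in>blotto_S N K. \<Sum>t\<in>blotto_S N K. \<sigma> s * \<tau> t * blotto_payoff \<alpha> K s t)"

definition nash :: "real \<Rightarrow> nat \<Rightarrow> nat \<Rightarrow> ((nat \<Rightarrow> nat) \<Rightarrow> real) \<Rightarrow> ((nat \<Rightarrow> nat) \<Rightarrow> real) \<Rightarrow> bool" where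
  "nash \<alpha> N K \<sigma>A \<sigma>B \<longleftrightarrow> mixed N K \<sigma>A \<and> mixed N K \<sigma>B
     \<and> (\<forall>\<sigma>'. mixed N K \<sigma>' \<longrightarrow> exp_payoff \<alpha> N K \<sigma>' \<sigma>B \<le> exp_payoff \<alpha> N K \<sigma>A \<sigma>B)
     \<and> (\<forall>\<sigma>'. mixed N K \<sigma>' \<longrightarrow> exp_payoff \<alpha> N K \<sigma>' \<sigma>A \<le> exp_payoff \<alpha> N K \<sigma>B \<sigma>A)"

end

theory Submission imports Defs "HOL-Library.FuncSet" begin


lemma finite_S: "finite (blotto_S N K)"
proof -
  have "blotto_S N K \<subseteq> (\<lambda>g k. if k < K then g k else 0) ` ({..<K} \<rightarrow>\<^sub>E {..N})"
  proof
    fix s assume s: "s \<in> blotto_S N K"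
    hence z: "\<forall>k. K \<le> k \<longrightarrow> s k = 0" and sm: "(\<Sum>k<K. s k) = N" by (auto simp: blotto_S_def)
    have le: "s k \<le> N" if "k < K" for k
      using member_le_sum[of k "{..<K}" s] that sm by auto
    have "s = (\<lambda>k. if k < K then restrict s {..<K} k else 0)"
      using z by (auto simp: fun_eq_iff)
    moreover have "restrict s {..<K} \<in> {..<K} \<rightarrow>\<^sub>E {..N}" using le by auto
    ultimately show "s \<in> (\<lambda>g k. if k < K then g k else 0) ` ({..<K} \<rightarrow>\<^sub>E {..N})" by blast
  qed
  moreover have "finite ({..<K} \<rightarrow>\<^sub>E {..N})" by (rule finite_PiE) auto
  ultimately show ?thesis by (meson finite_imageI finite_subset)
qed

lemma constsum: "blotto_payoff 1 K s t + blotto_payoff 1 K t s = real K"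
proof -
  have "blotto_payoff 1 K s t + blotto_payoff 1 K t s = (\<Sum>k<K. (1::real))"
    unfolding blotto_payoff_def sum.distrib[symmetric] by (rule sum.cong) auto
  thus ?thesis by simp
qed

definition pay :: "nat \<Rightarrow> nat \<Rightarrow> ((nat \<Rightarrow> nat) \<Rightarrow> real) \<Rightarrow> (nat \<Rightarrow> nat) \<Rightarrow> real" where
  "pay N K \<rho> t = (\<Sum>t'\<in>blotto_S N K. \<rho> t' * blotto_payoff 1 K t t')"

lemma exp_pay: "exp_payoff 1 N K \<sigma> \<rho> = (\<Sum>t\<in>blotto_S N K. \<sigma> t * pay N K \<rho> t)"
  unfolding exp_payoff_def pay_def by (simp add: sum_distrib_left mult.assoc)

lemma mixed_sum: "mixed N K \<sigma> \<Longrightarrow> (\<Sum>t\<in>blotto_S N K. \<sigma> t) = 1"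
  by (simp add: mixed_def)

lemma exp_constsum:
  assumes "mixed N K \<sigma>" "mixed N K \<rho>"
  shows "exp_payoff 1 N K \<sigma> \<rho> + exp_payoff 1 N K \<rho> \<sigma> = real K"
proof -
  let ?S = "blotto_S N K"
  have "exp_payoff 1 N K \<rho> \<sigma> = (\<Sum>s\<in>?S. \<Sum>t\<in>?S. \<sigma> s * \<rho> t * blotto_payoff 1 K t s)"
    unfolding exp_payoff_def by (subst sum.swap) (simp add: mult.commute mult.left_commute)
  hence "exp_payoff 1 N K \<sigma> \<rho> + exp_payoff 1 N K \<rho> \<sigma>
     = (\<Sum>s\<in>?S. \<Sum>t\<in>?S. \<sigma> s * \<rho> t * blotto_payoff 1 K s t + \<sigma> s * \<rho> t * blotto_payoff 1 K t s)"
    by (simp add: exp_payoff_def sum.distrib)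
  also have "\<dots> = (\<Sum>s\<in>?S. \<Sum>t\<in>?S. \<sigma> s * \<rho> t * real K)"
    by (intro sum.cong refl) (metis constsum distrib_left)
  also have "\<dots> = (\<Sum>s\<in>?S. \<sigma> s * (\<Sum>t\<in>?S. \<rho> t * real K))"
    by (simp add: sum_distrib_left mult.assoc)
  also have "(\<Sum>t\<in>?S. \<rho> t * real K) = real K"
    using mixed_sum[OF assms(2)] by (simp add: sum_distrib_right[symmetric])
  also have "(\<Sum>s\<in>?S. \<sigma> s * real K) = real K"
    using mixed_sum[OF assms(1)] by (simp add: sum_distrib_right[symmetric])
  finally show ?thesis .
qed

lemma exp_le:
  assumes "mixed N K \<sigma>" "\<And>t. t \<in> blotto_S N K \<Longrightarrow> pay N K \<rho> t \<le> c"
  shows "exp_payoff 1 N K \<sigma> \<rho> \<le> c"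
proof -
  have "exp_payoff 1 N K \<sigma> \<rho> \<le> (\<Sum>t\<in>blotto_S N K. \<sigma> t * c)"
    unfolding exp_pay using assms by (intro sum_mono mult_left_mono) (auto simp: mixed_def)
  also have "\<dots> = c" using assms by (simp add: sum_distrib_right[symmetric] mixed_sum)
  finally show ?thesis .
qed

lemma exp_less:
  assumes "mixed N K \<sigma>" "\<And>t. t \<in> blotto_S N K \<Longrightarrow> pay N K \<rho> t \<le> c"
    and "s \<in> blotto_S N K" "\<sigma> s > 0" "pay N K \<rho> s < c"
  shows "exp_payoff 1 N K \<sigma> \<rho> < c"
proof -
  have "exp_payoff 1 N K \<sigma> \<rho> < (\<Sum>t\<in>blotto_S N K. \<sigma> t * c)"
    unfolding exp_pay
  proof (rule sum_strict_mono_ex1[OF finite_S])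
    show "\<forall>x\<in>blotto_S N K. \<sigma> x * pay N K \<rho> x \<le> \<sigma> x * c"
      using assms by (auto intro: mult_left_mono simp: mixed_def)
    show "\<exists>a\<in>blotto_S N K. \<sigma> a * pay N K \<rho> a < \<sigma> a * c"
      using assms by (auto intro!: bexI[of _ s] mult_strict_left_mono)
  qed
  also have "\<dots> = c" using assms by (simp add: sum_distrib_right[symmetric] mixed_sum)
  finally show ?thesis .
qed

lemma gsum: "(\<Sum>v\<le>L. (if x > v then 1 else 0) + 1/2 * (if x = v then 1 else (0::real)))
   = (if x \<le> L then real x + 1/2 else real L + 1)"
  by (induction L) auto



lemma group_sum:
  fixes L :: nat
  assumes "\<forall>u\<le>L. col u \<in> blotto_S N K"
  shows "(\<Sum>t\<in>blotto_S N K. real (card {u. u \<le> L \<and> col u = t}) * f t) = (\<Sum>u\<le>L. f (col u))"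
proof -
  have "(\<Sum>t\<in>blotto_S N K. \<Sum>u\<in>{x. x \<in> {..L} \<and> col x = t}. f (col u)) = (\<Sum>u\<le>L. f (col u))"
    by (rule sum.group) (use assms finite_S in auto)
  moreover have "(\<Sum>u\<in>{x. x \<in> {..L} \<and> col x = t}. f (col u)) = real (card {u. u \<le> L \<and> col u = t}) * f t" for t
  proof -
    have "(\<Sum>u\<in>{x. x \<in> {..L} \<and> col x = t}. f (col u)) = (\<Sum>u\<in>{x. x \<in> {..L} \<and> col x = t}. f t)"
      by (rule sum.cong) auto
    thus ?thesis by simp
  qed
  ultimately show ?thesis by simp
qed

lemma tau_props:
  fixes L N K :: nat and col :: "nat \<Rightarrow> nat \<Rightarrow> nat"
  assumes col: "\<forall>u\<le>L. col u \<in> blotto_S N K"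
    and rows: "\<forall>k<K. \<forall>h::nat\<Rightarrow>real. (\<Sum>u\<le>L. h (col u k)) = (\<Sum>v\<le>L. h v)"
    and NL: "real N + real K / 2 = real K * (real L + 1) / 2"
  defines "\<tau> \<equiv> \<lambda>t. real (card {u. u \<le> L \<and> col u = t}) / (real L + 1)"
  shows "mixed N K \<tau>" "\<And>t. t \<in> blotto_S N K \<Longrightarrow> pay N K \<tau> t \<le> real K / 2"
    "\<And>t. t \<in> blotto_S N K \<Longrightarrow> \<exists>k<K. t k > L \<Longrightarrow> pay N K \<tau> t < real K / 2"
    "\<tau> (col 0) > 0"
proof -
  let ?S = "blotto_S N K"
  have gs: "(\<Sum>t\<in>?S. \<tau> t * f t) = (\<Sum>u\<le>L. f (col u)) / (real L + 1)" for f
    using group_sum[OF col, of f] unfolding \<tau>_def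
    by (simp add: sum_divide_distrib[symmetric] mult.commute)
  have fin: "finite {u. u \<le> L \<and> col u = t}" for t by auto
  show "mixed N K \<tau>"
    unfolding mixed_def
  proof (intro conjI allI impI)
    show "0 \<le> \<tau> s" for s unfolding \<tau>_def by simp
    show "\<tau> s = 0" if "s \<notin> ?S" for s
    proof -
      have "{u. u \<le> L \<and> col u = s} = {}" using col that by auto
      thus ?thesis unfolding \<tau>_def by simp
    qed
    show "(\<Sum>s\<in>?S. \<tau> s) = 1" using gs[of "\<lambda>_. 1"] by simp
  qed
  show "\<tau> (col 0) > 0"
  proof -
    have "0 \<in> {u. u \<le> L \<and> col u = col 0}" by simp
    hence "card {u. u \<le> L \<and> col u = col 0} > 0" using fin card_gt_0_iff by blast
    thus ?thesis unfolding \<tau>_def by simp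
  qed
  define w where "w = (\<lambda>x v::nat. (if x > v then 1 else 0) + 1/2 * (if x = v then 1 else (0::real)))"
  define G where "G = (\<lambda>x::nat. if x \<le> L then real x + 1/2 else real L + 1)"
  have payeq: "pay N K \<tau> t = (\<Sum>k<K. G (t k)) / (real L + 1)" for t
  proof -
    have "pay N K \<tau> t = (\<Sum>u\<le>L. blotto_payoff 1 K t (col u)) / (real L + 1)"
      unfolding pay_def by (rule gs)
    also have "(\<Sum>u\<le>L. blotto_payoff 1 K t (col u)) = (\<Sum>u\<le>L. \<Sum>k<K. w (t k) (col u k))"
      unfolding blotto_payoff_def w_def by simp
    also have "\<dots> = (\<Sum>k<K. \<Sum>u\<le>L. w (t k) (col u k))" by (rule sum.swap)
    also have "\<dots> = (\<Sum>k<K. \<Sum>v\<le>L. w (t k) v)"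
      by (rule sum.cong) (use rows in auto)
    also have "\<dots> = (\<Sum>k<K. G (t k))"
      unfolding w_def G_def using gsum by simp
    finally show ?thesis .
  qed
  have Gle: "G x \<le> real x + 1/2" for x unfolding G_def by auto
  have Glt: "x > L \<Longrightarrow> G x < real x + 1/2" for x unfolding G_def by auto
  have sumt: "t \<in> ?S \<Longrightarrow> (\<Sum>k<K. real (t k) + 1/2) = real K * (real L + 1) / 2" for t
    using NL by (simp add: sum.distrib blotto_S_def flip: of_nat_sum)
  show "pay N K \<tau> t \<le> real K / 2" if "t \<in> ?S" for t
  proof -
    have "(\<Sum>k<K. G (t k)) \<le> (\<Sum>k<K. real (t k) + 1/2)" by (rule sum_mono) (rule Gle)
    thus ?thesis unfolding payeq using sumt[OF that] by (simp add: divide_simps)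
  qed
  show "pay N K \<tau> t < real K / 2" if "t \<in> ?S" "\<exists>k<K. t k > L" for t
  proof -
    have "(\<Sum>k<K. G (t k)) < (\<Sum>k<K. real (t k) + 1/2)"
      by (rule sum_strict_mono_ex1) (use that Gle Glt in auto)
    thus ?thesis unfolding payeq using sumt[OF that(1)] by (simp add: divide_simps)
  qed
qed



lemma count_step:
  fixes Li r P l :: int
  assumes "Li > 0" "0 \<le> r" "r < Li" "0 \<le> l" "l \<le> Li"
  shows "{x. P \<le> x \<and> x < P + l \<and> x mod Li = r}
       = (if (r - P) mod Li < l then {P + (r - P) mod Li} else {})"
proof -
  have "x = P + (r - P) mod Li \<and> (r - P) mod Li < l" if "P \<le> x" "x < P + l" "x mod Li = r" for x
  proof -
    have "(x - P) mod Li = x - P" using that assms by (intro mod_pos_pos_trivial) auto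
    moreover have "(x - P) mod Li = (r - P) mod Li"
      using that(3) by (metis mod_diff_left_eq)
    ultimately show ?thesis using that by auto
  qed
  moreover have "(P + (r - P) mod Li) mod Li = r"
    using assms by (metis add.commute diff_add_cancel mod_add_left_eq mod_pos_pos_trivial)
  moreover have "0 \<le> (r - P) mod Li" using assms by simp
  ultimately show ?thesis by auto
qed

lemma count_lemma:
  fixes l :: "nat \<Rightarrow> int" and Li r :: int
  assumes "Li > 0" "0 \<le> r" "r < Li" "\<forall>m. 0 \<le> l m \<and> l m \<le> Li"
  shows "(\<Sum>m<t. (if (r - (\<Sum>i<m. l i)) mod Li < l m then 1 else 0::int))
       = int (card {x. 0 \<le> x \<and> x < (\<Sum>i<t. l i) \<and> x mod Li = r})"
proof (induction t)
  case 0
  have "{x. 0 \<le> x \<and> x < (\<Sum>i<0. l i) \<and> x mod Li = r} = {}" by auto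
  thus ?case by (simp only: card.empty) simp
next
  case (Suc t)
  define P where "P = (\<Sum>i<t. l i)"
  have P0: "0 \<le> P" unfolding P_def using assms by (simp add: sum_nonneg)
  have un: "{x. 0 \<le> x \<and> x < P + l t \<and> x mod Li = r}
      = {x. 0 \<le> x \<and> x < P \<and> x mod Li = r} \<union> {x. P \<le> x \<and> x < P + l t \<and> x mod Li = r}"
    using P0 assms(4) by (auto intro: order.strict_trans2[of _ P])
  have fin1: "finite {x. 0 \<le> x \<and> x < P \<and> x mod Li = r}"
    by (rule finite_subset[of _ "{0..<P}"]) auto
  have fin2: "finite {x. P \<le> x \<and> x < P + l t \<and> x mod Li = r}"
    by (rule finite_subset[of _ "{P..<P + l t}"]) auto
  have "card {x. 0 \<le> x \<and> x < P + l t \<and> x mod Li = r}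
     = card {x. 0 \<le> x \<and> x < P \<and> x mod Li = r} + card {x. P \<le> x \<and> x < P + l t \<and> x mod Li = r}"
    unfolding un by (rule card_Un_disjoint[OF fin1 fin2]) auto
  moreover have "int (card {x. P \<le> x \<and> x < P + l t \<and> x mod Li = r})
     = (if (r - P) mod Li < l t then 1 else 0)"
    using count_step[of Li r "l t" P] assms by auto
  ultimately show ?case using Suc by (simp add: P_def)
qed

lemma sum_pairs: "(\<Sum>k<2*H. f k) = (\<Sum>m<H. f (2*m) + f (2*m+1))" for f :: "nat \<Rightarrow> 'a::comm_monoid_add"
  by (induction H) (simp_all add: add.assoc)

definition ee :: "int \<Rightarrow> int \<Rightarrow> int" where "ee a j = j + (if a \<le> j then 1 else 0)"

lemma mod_2L: "0 \<le> x \<Longrightarrow> x < 2*L \<Longrightarrow> (x::int) mod L = (if x < L then x else x - L)"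
proof (cases "x < L")
  case False
  assume "0 \<le> x" "x < 2*L"
  have "x mod L = (x - L) mod L" by (simp add: mod_diff_right_eq[symmetric])
  also have "\<dots> = x - L" using False \<open>x < 2*L\<close> by (intro mod_pos_pos_trivial) auto
  finally show ?thesis using False by simp
qed simp

lemma pair_val:
  fixes a b L Pp Pn r :: int
  assumes "0\<le>a" "a\<le>L" "0\<le>b" "b\<le>L" "0\<le>r" "r<L"
  defines "d \<equiv> a + b - L"
  defines "j \<equiv> (r - (if d \<ge> 0 then Pp - (a - d) else Pn - a)) mod L"
  shows "ee a j + ee b (L - 1 - j) = L - (if (r - Pp) mod L < max d 0 then 1 else 0)
           + (if (r - Pn) mod L < max (- d) 0 then 1 else 0)"
proof -
  have L0: "0 < L" using assms(5,6) by simp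
  show ?thesis
proof (cases "d \<ge> 0")
  case True
  define \<rho> where "\<rho> = (r - Pp) mod L"
  have r0: "0 \<le> \<rho>" "\<rho> < L" unfolding \<rho>_def using assms by auto
  have "j = ((r - Pp) + (a - d)) mod L" unfolding j_def using True
    by (simp add: algebra_simps)
  hence "j = (\<rho> + (a - d)) mod L" unfolding \<rho>_def by (simp add: mod_add_left_eq)
  moreover have "0 \<le> \<rho> + (a - d)" "\<rho> + (a - d) < 2*L" using r0 assms(1-6) True unfolding d_def by auto
  ultimately have jv: "j = (if \<rho> + (a - d) < L then \<rho> + (a - d) else \<rho> + (a - d) - L)"
    using mod_2L by simp
  have n0: "\<not> (r - Pn) mod L < max (- d) 0" using pos_mod_sign[OF L0, of "r - Pn"] True by simp
  show ?thesis using jv r0 True assms(1-6) L0 using n0 unfolding \<rho>_def[symmetric] ee_def d_def by (smt (verit))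
next
  case False
  define \<rho> where "\<rho> = (r - Pn) mod L"
  have r0: "0 \<le> \<rho>" "\<rho> < L" unfolding \<rho>_def using assms by auto
  have "j = ((r - Pn) + a) mod L" unfolding j_def using False
    by (simp add: algebra_simps)
  hence "j = (\<rho> + a) mod L" unfolding \<rho>_def by (simp add: mod_add_left_eq)
  moreover have "0 \<le> \<rho> + a" "\<rho> + a < 2*L" using r0 assms(1-6) False unfolding d_def by auto
  ultimately have jv: "j = (if \<rho> + a < L then \<rho> + a else \<rho> + a - L)"
    using mod_2L by simp
  have n0: "\<not> (r - Pp) mod L < max d 0" using pos_mod_sign[OF L0, of "r - Pp"] False by simp
  show ?thesis using jv r0 False assms(1-6) L0 using n0 unfolding \<rho>_def[symmetric] ee_def d_def by (smt (verit))
qed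
qed



definition aa :: "(nat\<Rightarrow>nat) \<Rightarrow> nat \<Rightarrow> int" where "aa s m = int (s (2*m))"
definition bb :: "(nat\<Rightarrow>nat) \<Rightarrow> nat \<Rightarrow> int" where "bb s m = int (s (2*m+1))"
definition dd :: "nat \<Rightarrow> (nat\<Rightarrow>nat) \<Rightarrow> nat \<Rightarrow> int" where "dd L s m = aa s m + bb s m - int L"
definition lp :: "nat \<Rightarrow> (nat\<Rightarrow>nat) \<Rightarrow> nat \<Rightarrow> int" where "lp L s m = max (dd L s m) 0"
definition ln :: "nat \<Rightarrow> (nat\<Rightarrow>nat) \<Rightarrow> nat \<Rightarrow> int" where "ln L s m = max (- dd L s m) 0"
definition Pp :: "nat \<Rightarrow> (nat\<Rightarrow>nat) \<Rightarrow> nat \<Rightarrow> int" where "Pp L s m = (\<Sum>i<m. lp L s i)"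
definition Pn :: "nat \<Rightarrow> (nat\<Rightarrow>nat) \<Rightarrow> nat \<Rightarrow> int" where "Pn L s m = (\<Sum>i<m. ln L s i)"
definition off :: "nat \<Rightarrow> (nat\<Rightarrow>nat) \<Rightarrow> nat \<Rightarrow> int" where
  "off L s m = (if dd L s m \<ge> 0 then Pp L s m - (aa s m - dd L s m) else Pn L s m - aa s m)"
definition jj :: "nat \<Rightarrow> (nat\<Rightarrow>nat) \<Rightarrow> nat \<Rightarrow> nat \<Rightarrow> int" where
  "jj L s m u = (int u - 1 - off L s m) mod int L"
definition colI :: "nat \<Rightarrow> nat \<Rightarrow> (nat\<Rightarrow>nat) \<Rightarrow> nat \<Rightarrow> nat \<Rightarrow> int" where
  "colI L K s u k = (if k < K then (if even k then ee (aa s (k div 2)) (jj L s (k div 2) u)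
      else ee (bb s (k div 2)) (int L - 1 - jj L s (k div 2) u)) else 0)"
definition col :: "nat \<Rightarrow> nat \<Rightarrow> (nat\<Rightarrow>nat) \<Rightarrow> nat \<Rightarrow> nat \<Rightarrow> nat" where
  "col L K s u = (if u = 0 then s else (\<lambda>k. nat (colI L K s u k)))"

lemma ee_bounds: "0 \<le> a \<Longrightarrow> 0 \<le> j \<Longrightarrow> j < L \<Longrightarrow> 0 \<le> ee a j \<and> ee a j \<le> L \<and> ee a j \<noteq> a"
  unfolding ee_def by auto

lemma ee_inj: "ee a j = ee a j' \<Longrightarrow> j = j'"
  unfolding ee_def by (auto split: if_splits)

lemma jj_bounds: "0 < L \<Longrightarrow> 0 \<le> jj L s m u \<and> jj L s m u < int L"
  unfolding jj_def by simp

lemma jj_inj: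
  assumes "0 < L" "1 \<le> u" "u \<le> L" "1 \<le> u'" "u' \<le> L" "jj L s m u = jj L s m u'"
  shows "u = u'"
proof -
  have "int L dvd ((int u - 1 - off L s m) - (int u' - 1 - off L s m))"
    using assms(6) unfolding jj_def by (simp add: mod_eq_dvd_iff)
  hence d: "int L dvd (int u - int u')" by simp
  show ?thesis
  proof (rule ccontr)
    assume "u \<noteq> u'"
    hence "int u - int u' \<noteq> 0" by simp
    from dvd_imp_le_int[OF this d] assms show False by auto
  qed
qed

lemma colI_bounds:
  assumes "0 < L" "k < K" "\<forall>k<K. s k \<le> L"
  shows "0 \<le> colI L K s u k \<and> colI L K s u k \<le> int L \<and> colI L K s u k \<noteq> int (s k)"
proof (cases "even k")
  case True
  then obtain m where m: "k = 2*m" by (auto elim: evenE)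
  show ?thesis using ee_bounds[of "aa s m" "jj L s m u" "int L"] jj_bounds[OF assms(1), of s m u] True m assms(2)
    by (simp add: colI_def aa_def)
next
  case False
  then obtain m where m: "k = 2*m+1" by (auto elim: oddE)
  show ?thesis using ee_bounds[of "bb s m" "int L - 1 - jj L s m u" "int L"] jj_bounds[OF assms(1), of s m u] False m assms(2)
    by (simp add: colI_def bb_def)
qed

lemma colI_inj:
  assumes "0 < L" "k < K" "1 \<le> u" "u \<le> L" "1 \<le> u'" "u' \<le> L" "colI L K s u k = colI L K s u' k"
  shows "u = u'"
proof -
  have "jj L s (k div 2) u = jj L s (k div 2) u'"
    using assms(2,7) unfolding colI_def by (auto split: if_splits dest!: ee_inj)
  thus ?thesis using jj_inj assms by blast
qed

lemma row_bij:
  assumes "0 < L" "k < K" "\<forall>k<K. s k \<le> L"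
  shows "bij_betw (\<lambda>u. col L K s u k) {..L} {..L}"
proof -
  let ?f = "\<lambda>u. col L K s u k"
  have img: "?f ` {..L} \<subseteq> {..L}"
  proof
    fix v assume "v \<in> ?f ` {..L}"
    then obtain u where u: "v = ?f u" by auto
    show "v \<in> {..L}"
    proof (cases "u = 0")
      case True thus ?thesis using u assms by (simp add: col_def)
    next
      case False thus ?thesis using u colI_bounds[OF assms, of u] by (simp add: col_def nat_le_iff)
    qed
  qed
  have inj: "inj_on ?f {..L}"
  proof (rule inj_onI)
    fix u u' assume uu: "u \<in> {..L}" "u' \<in> {..L}" "?f u = ?f u'"
    have B: "int (col L K s w k) = colI L K s w k \<and> col L K s w k \<noteq> s k" if "1 \<le> w" for w
    proof -
      have c: "0 \<le> colI L K s w k" "colI L K s w k \<noteq> int (s k)" using colI_bounds[OF assms, of w] by auto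
      have "col L K s w k = nat (colI L K s w k)" using that by (simp add: col_def)
      thus ?thesis using c by auto
    qed
    show "u = u'"
    proof (cases "u = 0"; cases "u' = 0")
      assume "u = 0" "u' \<noteq> 0" thus ?thesis using B[of u'] uu(3) by (simp add: col_def)
    next
      assume "u \<noteq> 0" "u' = 0" thus ?thesis using B[of u] uu(3) by (simp add: col_def)
    next
      assume "u \<noteq> 0" "u' \<noteq> 0"
      hence "colI L K s u k = colI L K s u' k" using B[of u] B[of u'] uu(3) by simp
      thus ?thesis using colI_inj[OF assms(1,2)] uu \<open>u \<noteq> 0\<close> \<open>u' \<noteq> 0\<close> by auto
    qed simp
  qed
  have "card (?f ` {..L}) = card {..L}" using card_image[OF inj] by simp
  hence "?f ` {..L} = {..L}" using img by (intro card_subset_eq) auto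
  thus ?thesis using inj by (simp add: bij_betw_def)
qed



lemma col_sum:
  assumes K: "K = 2*H" and L0: "0 < L" and sS: "s \<in> blotto_S N K" and sL: "\<forall>k<K. s k \<le> L"
    and NHL: "N = H*L" and u: "1 \<le> u" "u \<le> L"
  shows "(\<Sum>k<K. colI L K s u k) = int N"
proof -
  have sL': "s k \<le> L" for k using sL sS by (cases "k < K") (auto simp: blotto_S_def)
  define r where "r = int u - 1"
  have r: "0 \<le> r" "r < int L" using u unfolding r_def by auto
  define pb where "pb m = (if (r - Pp L s m) mod int L < lp L s m then 1 else 0::int)" for m
  define nb where "nb m = (if (r - Pn L s m) mod int L < ln L s m then 1 else 0::int)" for m
  have pair: "colI L K s u (2*m) + colI L K s u (2*m+1) = int L - pb m + nb m" if "m < H" for m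
  proof -
    have "colI L K s u (2*m) + colI L K s u (2*m+1)
        = ee (aa s m) (jj L s m u) + ee (bb s m) (int L - 1 - jj L s m u)"
      using that K by (simp add: colI_def)
    also have "\<dots> = int L - pb m + nb m"
      using pair_val[of "aa s m" "int L" "bb s m" r "Pp L s m" "Pn L s m"] sL' r
      unfolding pb_def nb_def lp_def ln_def jj_def off_def dd_def r_def
      by (simp add: aa_def bb_def)
    finally show ?thesis .
  qed
  have "(\<Sum>k<K. colI L K s u k) = (\<Sum>m<H. int L - pb m + nb m)"
    unfolding sum_pairs[of _ H, folded K] using pair by (intro sum.cong) auto
  also have "\<dots> = int H * int L - (\<Sum>m<H. pb m) + (\<Sum>m<H. nb m)"
    by (simp add: sum.distrib sum_subtractf)
  also have "(\<Sum>m<H. pb m) = (\<Sum>m<H. nb m)"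
  proof -
    have lpb: "\<forall>m. 0 \<le> lp L s m \<and> lp L s m \<le> int L" and lnb: "\<forall>m. 0 \<le> ln L s m \<and> ln L s m \<le> int L"
      using sL' by (auto simp: lp_def ln_def dd_def aa_def bb_def intro: add_mono[of _ "int L" _ "int L", simplified])
    have sab: "(\<Sum>m<H. aa s m + bb s m) = int N"
    proof -
      have "(\<Sum>m<H. aa s m + bb s m) = (\<Sum>k<K. int (s k))"
        unfolding K sum_pairs by (simp add: aa_def bb_def)
      also have "\<dots> = int N" using sS by (simp add: blotto_S_def flip: of_nat_sum)
      finally show ?thesis .
    qed
    have "(\<Sum>m<H. lp L s m) - (\<Sum>m<H. ln L s m) = (\<Sum>m<H. dd L s m)"
      unfolding sum_subtractf[symmetric] lp_def ln_def by (intro sum.cong) auto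
    also have "\<dots> = 0" using sab NHL by (simp add: dd_def sum_subtractf)
    finally have eqP: "Pp L s H = Pn L s H" unfolding Pp_def Pn_def by simp
    have "(\<Sum>m<H. pb m) = int (card {x. 0 \<le> x \<and> x < Pp L s H \<and> x mod int L = r})"
      unfolding pb_def Pp_def using count_lemma[of "int L" r "lp L s" H] L0 r lpb by simp
    also have "\<dots> = (\<Sum>m<H. nb m)"
      unfolding nb_def eqP unfolding Pn_def using count_lemma[of "int L" r "ln L s" H] L0 r lnb by simp
    finally show ?thesis .
  qed
  finally show ?thesis using NHL by simp
qed

lemma construct:
  assumes K: "K = 2*H" and L0: "0 < L" and sS: "s \<in> blotto_S N K" and sL: "\<forall>k<K. s k \<le> L"
    and NHL: "N = H*L"
  shows "col L K s 0 = s" "\<forall>u\<le>L. col L K s u \<in> blotto_S N K"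
    "\<forall>k<K. \<forall>h::nat\<Rightarrow>real. (\<Sum>u\<le>L. h (col L K s u k)) = (\<Sum>v\<le>L. h v)"
proof -
  show "col L K s 0 = s" by (simp add: col_def)
  show "\<forall>u\<le>L. col L K s u \<in> blotto_S N K"
  proof (intro allI impI)
    fix u assume u: "u \<le> L"
    show "col L K s u \<in> blotto_S N K"
    proof (cases "u = 0")
      case True thus ?thesis using sS by (simp add: col_def)
    next
      case False
      have nn: "0 \<le> colI L K s u k" if "k < K" for k using colI_bounds[OF L0 that sL] by simp
      have "int (\<Sum>k<K. col L K s u k) = (\<Sum>k<K. colI L K s u k)"
        using False nn by (simp add: col_def of_nat_sum)
      also have "\<dots> = int N" using col_sum[OF K L0 sS sL NHL, of u] False u by simp
      finally have "(\<Sum>k<K. col L K s u k) = N" by (simp only: of_nat_eq_iff)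
      moreover have "\<forall>k. K \<le> k \<longrightarrow> col L K s u k = 0" using False by (simp add: col_def colI_def)
      ultimately show ?thesis by (simp add: blotto_S_def)
    qed
  qed
  show "\<forall>k<K. \<forall>h::nat\<Rightarrow>real. (\<Sum>u\<le>L. h (col L K s u k)) = (\<Sum>v\<le>L. h v)"
    using row_bij[OF L0 _ sL] sum.reindex_bij_betw by blast
qed



theorem corollary4:
  fixes N K :: nat and s :: "nat \<Rightarrow> nat"
  assumes "N \<ge> 1" and "K \<ge> 2" and "even K" and "K dvd N"
    and "s \<in> blotto_S N K"
  shows "(\<exists>\<sigma>A \<sigma>B. nash 1 N K \<sigma>A \<sigma>B \<and> (\<sigma>A s > 0 \<or> \<sigma>B s > 0))
         \<longleftrightarrow> (\<forall>k<K. real (s k) \<le> 2 * real N / real K)"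
proof -
  obtain H where K: "K = 2*H" using assms(3) by (auto elim: evenE)
  obtain n where Nn: "N = K*n" using assms(4) by (auto elim: dvdE)
  define L where "L = 2*n"
  have n1: "n \<ge> 1" using assms(1) Nn by (cases n) auto
  have L0: "0 < L" using n1 unfolding L_def by simp
  have NHL: "N = H*L" using Nn K unfolding L_def by simp
  have NL: "real N + real K / 2 = real K * (real L + 1) / 2"
    using Nn unfolding L_def by (simp add: algebra_simps)
  have Kpos: "real K > 0" using assms(2) by simp
  have bound: "(real x \<le> 2 * real N / real K) \<longleftrightarrow> x \<le> L" for x
  proof -
    have "2 * real N / real K = real L" using Kpos Nn unfolding L_def by (simp add: field_simps)
    thus ?thesis by simp
  qed
  have opt: "mixed N K (\<lambda>t. real (card {u. u \<le> L \<and> col L K t0 u = t}) / (real L + 1))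
     \<and> (\<forall>t\<in>blotto_S N K. pay N K (\<lambda>t. real (card {u. u \<le> L \<and> col L K t0 u = t}) / (real L + 1)) t \<le> real K / 2)
     \<and> (\<forall>t\<in>blotto_S N K. (\<exists>k<K. t k > L) \<longrightarrow> pay N K (\<lambda>t. real (card {u. u \<le> L \<and> col L K t0 u = t}) / (real L + 1)) t < real K / 2)
     \<and> (\<lambda>t. real (card {u. u \<le> L \<and> col L K t0 u = t}) / (real L + 1)) t0 > 0"
    if t0S: "t0 \<in> blotto_S N K" and t0L: "\<forall>k<K. t0 k \<le> L" for t0
  proof -
    note c = construct[OF K L0 t0S t0L NHL]
    note tp = tau_props[OF c(2) c(3) NL]
    show ?thesis using tp c(1) by auto
  qed
  show ?thesis
  proof
    assume "\<exists>\<sigma>A \<sigma>B. nash 1 N K \<sigma>A \<sigma>B \<and> (\<sigma>A s > 0 \<or> \<sigma>B s > 0)"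
    then obtain \<sigma>A \<sigma>B where ne: "nash 1 N K \<sigma>A \<sigma>B" and pos: "\<sigma>A s > 0 \<or> \<sigma>B s > 0" by blast
    show "\<forall>k<K. real (s k) \<le> 2 * real N / real K"
    proof (rule ccontr)
      assume "\<not> (\<forall>k<K. real (s k) \<le> 2 * real N / real K)"
      hence big: "\<exists>k<K. s k > L" using bound by (auto simp: not_le)
      define s0 where "s0 = (\<lambda>k. if k < K then n else 0)"
      have s0S: "s0 \<in> blotto_S N K" unfolding s0_def blotto_S_def using Nn by simp
      have s0L: "\<forall>k<K. s0 k \<le> L" unfolding s0_def L_def by simp
      define \<tau> where "\<tau> = (\<lambda>t. real (card {u. u \<le> L \<and> col L K s0 u = t}) / (real L + 1))"
      have mt: "mixed N K \<tau>" and le: "\<And>t. t \<in> blotto_S N K \<Longrightarrow> pay N K \<tau> t \<le> real K / 2"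
        and lt: "pay N K \<tau> s < real K / 2"
        using opt[OF s0S s0L] big assms(5) unfolding \<tau>_def by auto
      have mA: "mixed N K \<sigma>A" and mB: "mixed N K \<sigma>B"
        and d1: "exp_payoff 1 N K \<tau> \<sigma>B \<le> exp_payoff 1 N K \<sigma>A \<sigma>B"
        and d2: "exp_payoff 1 N K \<tau> \<sigma>A \<le> exp_payoff 1 N K \<sigma>B \<sigma>A"
        using ne mt unfolding nash_def by auto
      have AB: "exp_payoff 1 N K \<sigma>A \<sigma>B + exp_payoff 1 N K \<sigma>B \<sigma>A = real K"
        by (rule exp_constsum[OF mA mB])
      have tB: "exp_payoff 1 N K \<tau> \<sigma>B + exp_payoff 1 N K \<sigma>B \<tau> = real K"
        by (rule exp_constsum[OF mt mB])
      have tA: "exp_payoff 1 N K \<tau> \<sigma>A + exp_payoff 1 N K \<sigma>A \<tau> = real K"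
        by (rule exp_constsum[OF mt mA])
      have Bt: "exp_payoff 1 N K \<sigma>B \<tau> \<le> real K / 2" by (rule exp_le[OF mB le])
      have At: "exp_payoff 1 N K \<sigma>A \<tau> \<le> real K / 2" by (rule exp_le[OF mA le])
      show False
      proof (cases "\<sigma>A s > 0")
        case True
        have "exp_payoff 1 N K \<sigma>A \<tau> < real K / 2" by (rule exp_less[OF mA le assms(5) True lt])
        thus False using AB tB tA Bt At d1 d2 by linarith
      next
        case False
        hence Bs: "\<sigma>B s > 0" using pos by simp
        have "exp_payoff 1 N K \<sigma>B \<tau> < real K / 2" by (rule exp_less[OF mB le assms(5) Bs lt])
        thus False using AB tB tA Bt At d1 d2 by linarith
      qed
    qed
  next
    assume "\<forall>k<K. real (s k) \<le> 2 * real N / real K"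
    hence sL: "\<forall>k<K. s k \<le> L" using bound by auto
    define \<tau> where "\<tau> = (\<lambda>t. real (card {u. u \<le> L \<and> col L K s u = t}) / (real L + 1))"
    have mt: "mixed N K \<tau>" and le: "\<And>t. t \<in> blotto_S N K \<Longrightarrow> pay N K \<tau> t \<le> real K / 2"
      and ps: "\<tau> s > 0"
      using opt[OF assms(5) sL] unfolding \<tau>_def by auto
    have tt: "exp_payoff 1 N K \<tau> \<tau> = real K / 2" using exp_constsum[OF mt mt] by simp
    have "exp_payoff 1 N K \<sigma>' \<tau> \<le> exp_payoff 1 N K \<tau> \<tau>" if "mixed N K \<sigma>'" for \<sigma>'
      using exp_le[OF that le] tt by simp
    hence "nash 1 N K \<tau> \<tau>"
      unfolding nash_def using mt by auto
    thus "\<exists>\<sigma>A \<sigma>B. nash 1 N K \<sigma>A \<sigma>B \<and> (\<sigma>A s > 0 \<or> \<sigma>B s > 0)" using ps by blast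
  qed
qed

end
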